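(* Let $n>1$ be an odd perfect square. Then $D_{S(n)^*}=5$.
   Context: For a natural number $n$, $\mathbb Z_n=\mathbb Z/n\mathbb Z$, $S(n)=\{x^2:x\in\mathbb Z_n\}$, $S(n)^*=S(n)\setminus\{0\}$. For $A\subseteq\mathbb Z_n$, a sequence $(y_1,\dots,y_t)$ ($t\ge1$) in $\mathbb Z_n$ is an $A$-weighted zero-sum sequence if there exist $a_1,\dots,a_t\in A$ with $\sum a_iy_i=0$; a sequence has an $A$-weighted zero-sum subsequence if some nonempty subsequence is an $A$-weighted zero-sum sequence. $D_A(n)$ is the least positive integer $t$ such that every sequence of length $t$ in $\mathbb Z_n$ has an $A$-weighted zero-sum subsequence; $D_{S(n)^*}=D_{S(n)^*}(n)$. *)

theory Defs
  imports Main "HOL-Library.Sublist"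
begin

definition Zn :: "nat \<Rightarrow> int set" where
  "Zn n = {0..<int n}"

definition sq_set :: "nat \<Rightarrow> int set" where
  "sq_set n = {(x^2) mod int n | x. x \<in> Zn n}"

definition sq_set_star :: "nat \<Rightarrow> int set" where
  "sq_set_star n = sq_set n - {0}"

definition weighted_zero_sum :: "nat \<Rightarrow> int set \<Rightarrow> int list \<Rightarrow> bool" where
  "weighted_zero_sum n A ys \<longleftrightarrow> ys \<noteq> [] \<and>
     (\<exists>as. length as = length ys \<and> set as \<subseteq> A \<and>
        (\<Sum>i<length ys. as ! i * ys ! i) mod int n = 0)"

definition has_wzs_subseq :: "nat \<Rightarrow> int set \<Rightarrow> int list \<Rightarrow> bool" where
  "has_wzs_subseq n A ys \<longleftrightarrow> (\<exists>zs. subseq zs ys \<and> weighted_zero_sum n A zs)"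

definition weighted_davenport :: "nat \<Rightarrow> int set \<Rightarrow> nat" where
  "weighted_davenport n A = (LEAST t. t > 0 \<and>
     (\<forall>ys. length ys = t \<and> set ys \<subseteq> Zn n \<longrightarrow> has_wzs_subseq n A ys))"

end

theory Submission
  imports Defs "HOL-Number_Theory.Number_Theory"
begin

lemma small_cong_eq:
  fixes p u v :: int
  assumes "p > 2" "[u = v] (mod p)" "\<bar>u\<bar> \<le> 1" "\<bar>v\<bar> \<le> 1"
  shows "u = v"
proof -
  have "p dvd u - v" using assms(2) by (simp add: cong_iff_dvd_diff)
  then obtain k where k: "u - v = p * k" by auto
  have "\<bar>u - v\<bar> \<le> 2" using assms by linarith
  show ?thesis
  proof (rule ccontr)
    assume "u \<noteq> v"
    then have "k \<noteq> 0" using k by auto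
    then have "\<bar>p * k\<bar> \<ge> p" using assms(1) by (simp add: abs_mult)
    then show False using k \<open>\<bar>u - v\<bar> \<le> 2\<close> assms(1) by simp
  qed
qed

lemma legendre_abs: "\<bar>Legendre a p\<bar> \<le> 1"
  by (simp add: Legendre_def)

lemma legendre_mult:
  fixes p :: int
  assumes "prime p" "p > 2"
  shows "Legendre (a*b) p = Legendre a p * Legendre b p"
proof -
  define q where "q = nat p"
  have pq: "int q = p" using assms q_def by simp
  have qp1: "prime q" using assms(1) pq prime_nat_int_transfer[of q] by simp
  have qp2: "2 < q" using assms pq by linarith
  define k where "k = (q - 1) div 2"
  have h1: "[Legendre (a*b) p = (a*b)^k] (mod p)" using euler_criterion[OF qp1 qp2, of "a*b"] pq k_def by simp
  have h2: "[Legendre a p = a^k] (mod p)" using euler_criterion[OF qp1 qp2, of "a"] pq k_def by simp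
  have h3: "[Legendre b p = b^k] (mod p)" using euler_criterion[OF qp1 qp2, of "b"] pq k_def by simp
  have c1: "[Legendre a p * Legendre b p = a^k * b^k] (mod p)" using cong_mult[OF h2 h3] .
  have c2: "[Legendre (a*b) p = a^k * b^k] (mod p)" using h1 by (simp add: power_mult_distrib)
  have "[Legendre (a*b) p = Legendre a p * Legendre b p] (mod p)"
    using cong_trans[OF c2 cong_sym[OF c1]] .
  then show ?thesis using small_cong_eq[OF assms(2)] legendre_abs[of a p] legendre_abs[of b p] legendre_abs[of "a*b" p]
    by (simp add: abs_mult mult_le_one)
qed
lemma legendre_cong:
  assumes ab: "[a = b] (mod p)"
  shows "Legendre a p = Legendre b p"
proof -
  have ba: "[b = a] (mod p)" using cong_sym[OF ab] .
  have "QuadRes p a = QuadRes p b" unfolding QuadRes_def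
  proof
    assume "\<exists>y. [y\<^sup>2 = a] (mod p)"
    then obtain y where "[y\<^sup>2 = a] (mod p)" by blast
    then show "\<exists>y. [y\<^sup>2 = b] (mod p)" using cong_trans[OF _ ab] by blast
  next
    assume "\<exists>y. [y\<^sup>2 = b] (mod p)"
    then obtain y where "[y\<^sup>2 = b] (mod p)" by blast
    then show "\<exists>y. [y\<^sup>2 = a] (mod p)" using cong_trans[OF _ ba] by blast
  qed
  moreover have "[a = 0] (mod p) = [b = 0] (mod p)"
    using cong_trans[OF ba, of 0] cong_trans[OF ab, of 0] by blast
  ultimately show ?thesis by (simp add: Legendre_def)
qed

lemma legendre_1_iff:
  assumes "\<not> p dvd a"
  shows "Legendre a p = 1 \<longleftrightarrow> QuadRes p a"
proof -
  have "\<not> [a = 0] (mod p)" using assms by (simp add: cong_0_iff)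
  then show ?thesis unfolding Legendre_def by (simp only: if_False) simp
qed


lemma legendre_m1_iff:
  assumes "\<not> p dvd a"
  shows "Legendre a p = -1 \<longleftrightarrow> \<not> QuadRes p a"
proof -
  have "\<not> [a = 0] (mod p)" using assms by (simp add: cong_0_iff)
  then show ?thesis unfolding Legendre_def by (simp only: if_False) simp
qed

lemma legendre_vals:
  assumes "\<not> p dvd a"
  shows "Legendre a p = 1 \<or> Legendre a p = -1"
  using legendre_1_iff[OF assms] legendre_m1_iff[OF assms] by blast

lemma legendre_one: assumes "prime (p::int)" shows "Legendre 1 p = 1"
proof -
  have "QuadRes p 1" unfolding QuadRes_def by (rule exI[of _ 1]) simp
  moreover have "\<not> p dvd 1" using assms not_prime_unit by blast
  ultimately show ?thesis using legendre_1_iff by blast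
qed

lemma nqr_exists:
  fixes p :: int
  assumes "prime p" "p > 2"
  shows "\<exists>a. \<not> QuadRes p a"
proof (rule ccontr)
  assume "\<not> ?thesis"
  then have all: "\<And>a. QuadRes p a" by blast
  define K where "K = (p - 1) div 2"
  have "odd p" using prime_odd_int assms by blast
  then have pK: "p = 2*K + 1" unfolding K_def by presburger
  define f where "f y = y^2 mod p" for y :: int
  have sub: "{1..p-1} \<subseteq> f ` {1..K}"
  proof
    fix a assume a: "a \<in> {1..p-1}"
    have amod: "a mod p = a" using a by simp
    obtain y where y: "[y^2 = a] (mod p)" using all[of a] unfolding QuadRes_def by blast
    define r where "r = y mod p"
    have ry: "[r = y] (mod p)" by (simp add: r_def cong_def)
    have r2: "[r^2 = a] (mod p)" using cong_trans[OF cong_pow[OF ry] y] .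
    then have r2': "r^2 mod p = a" using amod by (simp add: cong_def)
    have r0: "0 \<le> r" "r < p" using assms(2) by (simp_all add: r_def)
    have rn0: "r \<noteq> 0"
    proof
      assume "r = 0"
      then have "a = 0" using r2' by simp
      then show False using a by simp
    qed
    show "a \<in> f ` {1..K}"
    proof (cases "r \<le> K")
      case True
      then have "r \<in> {1..K}" using r0 rn0 by simp
      moreover have "f r = a" using r2' by (simp add: f_def)
      ultimately show ?thesis by (metis image_eqI)
    next
      case False
      define s where "s = p - r"
      have "s \<in> {1..K}" using False r0 pK by (simp add: s_def)
      moreover have "s^2 = r^2 + p*(p - 2*r)" by (simp add: s_def power2_eq_square algebra_simps)
      then have "f s = a" using r2' by (simp add: f_def)
      ultimately show ?thesis by (metis image_eqI)
    qed
  qed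
  have "card {1..p-1} \<le> card (f ` {1..K})" by (rule card_mono[OF _ sub]) simp
  also have "\<dots> \<le> card {1..K}" by (rule card_image_le) simp
  finally have "nat (p - 1) \<le> nat K" by simp
  then show False using pK assms(2) by linarith
qed

lemma not_dvd_nqr:
  fixes p :: int
  assumes "\<not> QuadRes p a" shows "\<not> p dvd a"
proof
  assume "p dvd a"
  then have "[a = 0] (mod p)" by (simp add: cong_0_iff)
  then have "[0^2 = a] (mod p)" using cong_sym by simp
  then show False using assms unfolding QuadRes_def by blast
qed

lemma k_exists:
  fixes p :: int
  assumes "prime p" "p > 2"
  shows "\<exists>k. Legendre k p = 1 \<and> Legendre (k+1) p = -1"
proof -
  obtain a where a: "\<not> QuadRes p a" using nqr_exists[OF assms] by blast
  define a' where "a' = a mod p"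
  have aa: "[a' = a] (mod p)" by (simp add: a'_def cong_def)
  have pa: "\<not> p dvd a" using not_dvd_nqr[OF a] .
  have La: "Legendre a p = -1" using legendre_m1_iff[OF pa] a by simp
  have La': "Legendre a' p = -1" using La legendre_cong[OF aa] by simp
  have "a' \<noteq> 0" using pa by (simp add: a'_def dvd_eq_mod_eq_0)
  moreover have "a' \<ge> 0" using assms(2) by (simp add: a'_def)
  ultimately have a'pos: "a' > 0" by linarith
  have a'lt: "a' < p" using assms(2) a'_def by simp
  define S where "S = {j::nat. j \<ge> 1 \<and> Legendre (int j) p = -1}"
  have inS: "nat a' \<in> S" using a'pos La' by (simp add: S_def)
  define j0 where "j0 = (LEAST j. j \<in> S)"
  have j0S: "j0 \<in> S" using LeastI[of "\<lambda>j. j \<in> S", OF inS] j0_def by simp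
  have j0le: "j0 \<le> nat a'" using Least_le[of "\<lambda>j. j \<in> S", OF inS] j0_def by simp
  have L1: "Legendre 1 p = 1" using legendre_one[OF assms(1)] .
  have "j0 \<noteq> 1" using j0S L1 by (auto simp: S_def)
  then have j02: "j0 \<ge> 2" using j0S by (simp add: S_def)
  define k where "k = j0 - 1"
  have "k \<notin> S" using not_less_Least[of k "\<lambda>j. j \<in> S"] j0_def k_def j02 by simp
  then have Lk: "Legendre (int k) p \<noteq> -1" using j02 k_def by (simp add: S_def)
  have "int k > 0" "int k < p" using j02 k_def j0le a'lt by auto
  then have "\<not> p dvd int k" using zdvd_not_zless by blast
  then have "Legendre (int k) p = 1" using legendre_vals Lk by blast
  moreover have "int k + 1 = int j0" using j02 k_def by simp
  ultimately show ?thesis using j0S S_def by (intro exI[of _ "int k"]) simp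
qed


lemma legendre_dvd:
  assumes "p dvd a" shows "Legendre a p = 0"
proof -
  have "[a = 0] (mod p)" using assms by (simp add: cong_0_iff)
  then show ?thesis unfolding Legendre_def by (simp only: if_True)
qed

lemma unit_mult:
  fixes p :: int
  assumes "prime p" "\<not> p dvd a" "\<not> p dvd b"
  shows "\<not> p dvd a * b"
  using assms prime_dvd_mult_iff by blast

lemma sq_root_unit:
  fixes p :: int
  assumes "[w^2 = c] (mod p)" "\<not> p dvd c"
  shows "\<not> p dvd w"
proof
  assume "p dvd w"
  then have "p dvd w^2" by (simp add: power2_eq_square)
  moreover have "p dvd w^2 - c" using assms(1) by (simp add: cong_iff_dvd_diff)
  ultimately have "p dvd w^2 - (w^2 - c)" by (rule dvd_diff)
  then have "p dvd c" by simp
  then show False using assms(2) by simp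
qed

lemma inv_unit:
  fixes p :: int
  assumes "prime p" "[u * v = 1] (mod p)"
  shows "\<not> p dvd v"
proof
  assume "p dvd v"
  then have "p dvd u * v" by simp
  then have "[u * v = 0] (mod p)" by (simp add: cong_0_iff)
  then have "[1 = 0] (mod p)" using cong_trans[OF cong_sym[OF assms(2)]] by blast
  then have "p dvd 1" by (simp add: cong_0_iff)
  then show False using assms(1) not_prime_unit by blast
qed

lemma pair_zs:
  fixes p :: int
  assumes "prime p" "\<not> p dvd zi" "\<not> p dvd zj" "Legendre (- zi * zj) p = 1"
  shows "\<exists>xi xj. \<not> p dvd xi \<and> \<not> p dvd xj \<and> p dvd xi^2 * zi + xj^2 * zj"
proof -
  have u: "\<not> p dvd (- zi * zj)" using unit_mult[OF assms(1-3)] by simp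
  have "QuadRes p (- zi * zj)" using legendre_1_iff[OF u] assms(4) by simp
  then obtain w where w: "[w^2 = - zi * zj] (mod p)" unfolding QuadRes_def by blast
  have wu: "\<not> p dvd w" using sq_root_unit[OF w u] .
  have "p dvd w^2 - (- zi * zj)" using w by (simp add: cong_iff_dvd_diff)
  then have d: "p dvd zi * (w^2 - (- zi * zj))" by (rule dvd_mult)
  have e: "zi * (w^2 - (- zi * zj)) = w^2 * zi + zi^2 * zj" by (simp add: algebra_simps power2_eq_square)
  have "p dvd w^2 * zi + zi^2 * zj" using d unfolding e .
  then show ?thesis using wu assms(2) by blast
qed

lemma pm_cases:
  fixes e a b c :: int
  assumes "e = 1 \<or> e = -1" "a = 1 \<or> a = -1" "b = 1 \<or> b = -1" "c = 1 \<or> c = -1"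
  shows "e * a * b = 1 \<or> e * a * c = 1 \<or> e * b * c = 1 \<or> (e = -1 \<and> a = b \<and> a = c)"
  using assms by auto

lemma qr3:
  fixes p :: int
  assumes "prime p" "p > 2" "\<not> p dvd z1" "\<not> p dvd z2" "\<not> p dvd z3"
  shows "\<exists>x1 x2 x3. (x1 = 0 \<or> \<not> p dvd x1) \<and> (x2 = 0 \<or> \<not> p dvd x2) \<and> (x3 = 0 \<or> \<not> p dvd x3)
     \<and> (x1 \<noteq> 0 \<or> x2 \<noteq> 0 \<or> x3 \<noteq> 0) \<and> p dvd x1^2 * z1 + x2^2 * z2 + x3^2 * z3"
proof -
  have p0: "\<not> p dvd 0 \<Longrightarrow> False" by simp
  have nz: "\<And>x. \<not> p dvd x \<Longrightarrow> x \<noteq> 0" by auto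
  have Lm: "\<And>a b. Legendre (- a * b) p = Legendre (-1) p * Legendre a p * Legendre b p"
  proof -
    fix a b :: int
    have "Legendre (- a * b) p = Legendre ((-1) * (a * b)) p" by simp
    also have "\<dots> = Legendre (-1) p * Legendre a p * Legendre b p"
      using legendre_mult[OF assms(1,2), of "-1" "a*b"] legendre_mult[OF assms(1,2), of a b] by (simp add: mult.assoc)
    finally show "Legendre (- a * b) p = Legendre (-1) p * Legendre a p * Legendre b p" .
  qed
  have m1u: "\<not> p dvd -1" using assms(1) not_prime_unit by auto
  have L1: "Legendre z1 p = 1 \<or> Legendre z1 p = -1" using legendre_vals[OF assms(3)] .
  have L2: "Legendre z2 p = 1 \<or> Legendre z2 p = -1" using legendre_vals[OF assms(4)] .
  have L3: "Legendre z3 p = 1 \<or> Legendre z3 p = -1" using legendre_vals[OF assms(5)] .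
  have Lm1: "Legendre (-1) p = 1 \<or> Legendre (-1) p = -1" using legendre_vals[OF m1u] .
  consider (p12) "Legendre (- z1 * z2) p = 1" | (p13) "Legendre (- z1 * z3) p = 1"
    | (p23) "Legendre (- z2 * z3) p = 1"
    | (tri) "Legendre (-1) p = -1" "Legendre z1 p = Legendre z2 p" "Legendre z1 p = Legendre z3 p"
    using pm_cases[OF Lm1 L1 L2 L3] Lm[of z1 z2] Lm[of z1 z3] Lm[of z2 z3] by argo
  then show ?thesis
  proof cases
    case p12
    obtain xi xj where "\<not> p dvd xi" "\<not> p dvd xj" "p dvd xi^2 * z1 + xj^2 * z2"
      using pair_zs[OF assms(1,3,4) p12] by blast
    then show ?thesis by (intro exI[of _ xi] exI[of _ xj] exI[of _ 0]) (auto simp: nz)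
  next
    case p13
    obtain xi xj where "\<not> p dvd xi" "\<not> p dvd xj" "p dvd xi^2 * z1 + xj^2 * z3"
      using pair_zs[OF assms(1,3,5) p13] by blast
    then show ?thesis by (intro exI[of _ xi] exI[of _ 0] exI[of _ xj]) (auto simp: nz)
  next
    case p23
    obtain xi xj where "\<not> p dvd xi" "\<not> p dvd xj" "p dvd xi^2 * z2 + xj^2 * z3"
      using pair_zs[OF assms(1,4,5) p23] by blast
    then show ?thesis by (intro exI[of _ 0] exI[of _ xi] exI[of _ xj]) (auto simp: nz)
  next
    case tri
    have "Legendre (z1 * z2) p = 1" using legendre_mult[OF assms(1,2)] tri L1 by auto
    then have "QuadRes p (z1 * z2)" using legendre_1_iff unit_mult[OF assms(1,3,4)] by blast
    then obtain s where s: "[s^2 = z1 * z2] (mod p)" unfolding QuadRes_def by blast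
    have "Legendre (z1 * z3) p = 1" using legendre_mult[OF assms(1,2)] tri L1 by auto
    then have "QuadRes p (z1 * z3)" using legendre_1_iff unit_mult[OF assms(1,3,5)] by blast
    then obtain t where t: "[t^2 = z1 * z3] (mod p)" unfolding QuadRes_def by blast
    obtain k where k1: "Legendre k p = 1" and k2: "Legendre (k+1) p = -1" using k_exists[OF assms(1,2)] by blast
    have ku: "\<not> p dvd k" using k1 legendre_dvd[of p k] by auto
    have k1u: "\<not> p dvd (k+1)" using k2 legendre_dvd[of p "k+1"] by auto
    have "QuadRes p k" using legendre_1_iff[OF ku] k1 by simp
    then obtain a where a: "[a^2 = k] (mod p)" unfolding QuadRes_def by blast
    have "Legendre (- (k+1)) p = 1" using Lm[of 1 "k+1"] tri k2 legendre_one[OF assms(1)] by simp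
    moreover have k1u': "\<not> p dvd (- (k+1))" using k1u dvd_minus_iff by blast
    ultimately have "QuadRes p (- (k+1))" using legendre_1_iff by blast
    then obtain w where w: "[w^2 = - (k+1)] (mod p)" unfolding QuadRes_def by blast
    have su: "\<not> p dvd s" using sq_root_unit[OF s unit_mult[OF assms(1,3,4)]] .
    have tu: "\<not> p dvd t" using sq_root_unit[OF t unit_mult[OF assms(1,3,5)]] .
    have au: "\<not> p dvd a" using sq_root_unit[OF a ku] .
    have wu: "\<not> p dvd w" using sq_root_unit[OF w k1u'] .
    have cop: "\<And>x. \<not> p dvd x \<Longrightarrow> coprime x p"
      using assms(1) by (metis coprime_commute prime_imp_coprime)
    obtain z1' where z1': "[z1 * z1' = 1] (mod p)" using cong_solve_coprime_int[OF cop[OF assms(3)]] by blast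
    obtain s' where s': "[s * s' = 1] (mod p)" using cong_solve_coprime_int[OF cop[OF su]] by blast
    obtain t' where t': "[t * t' = 1] (mod p)" using cong_solve_coprime_int[OF cop[OF tu]] by blast
    define x1 where "x1 = a * z1'"
    define x2 where "x2 = s'"
    define x3 where "x3 = w * t'"
    have x1u: "\<not> p dvd x1" unfolding x1_def using unit_mult[OF assms(1) au inv_unit[OF assms(1) z1']] .
    have x2u: "\<not> p dvd x2" unfolding x2_def using inv_unit[OF assms(1) s'] .
    have x3u: "\<not> p dvd x3" unfolding x3_def using unit_mult[OF assms(1) wu inv_unit[OF assms(1) t']] .
    have e: "z1 * (x1^2 * z1 + x2^2 * z2 + x3^2 * z3) = a^2 * (z1 * z1')^2 + s'^2 * (z1 * z2) + w^2 * t'^2 * (z1 * z3)"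
      by (simp add: x1_def x2_def x3_def algebra_simps power2_eq_square)
    have c1: "[a^2 * (z1 * z1')^2 = k * 1^2] (mod p)" using cong_mult[OF a cong_pow[OF z1']] .
    have c2: "[s'^2 * (z1 * z2) = s'^2 * s^2] (mod p)" using cong_mult[OF cong_refl cong_sym[OF s]] .
    have c2': "[s'^2 * s^2 = 1^2] (mod p)" using cong_pow[OF s', of 2]
      by (simp add: power_mult_distrib mult.commute)
    have c3: "[w^2 * t'^2 * (z1 * z3) = w^2 * (t'^2 * t^2)] (mod p)"
      using cong_mult[OF cong_refl[of "w^2 * t'^2"] cong_sym[OF t]] by (simp add: mult.assoc)
    have c3': "[t'^2 * t^2 = 1^2] (mod p)" using cong_pow[OF t', of 2]
      by (simp add: power_mult_distrib mult.commute)
    have c3'': "[w^2 * (t'^2 * t^2) = (- (k+1)) * 1^2] (mod p)" using cong_mult[OF w c3'] .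
    have "[a^2 * (z1 * z1')^2 + s'^2 * (z1 * z2) + w^2 * t'^2 * (z1 * z3) = k * 1^2 + 1^2 + (- (k+1)) * 1^2] (mod p)"
      using cong_add[OF cong_add[OF c1 cong_trans[OF c2 c2']] cong_trans[OF c3 c3'']] .
    then have "p dvd z1 * (x1^2 * z1 + x2^2 * z2 + x3^2 * z3)" using e by (simp add: cong_0_iff)
    then have "p dvd x1^2 * z1 + x2^2 * z2 + x3^2 * z3" using assms(1,3) prime_dvd_mult_iff by blast
    then show ?thesis using x1u x2u x3u nz by blast
  qed
qed

lemma lift1:
  fixes p :: int
  assumes "prime p" "p > 2" "\<not> p dvd x" "\<not> p dvd z" "p dvd x^2 * z + R"
  shows "\<exists>x'. \<not> p dvd x' \<and> p^2 dvd x'^2 * z + R"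
proof -
  obtain q where q: "x^2 * z + R = p * q" using assms(5) by blast
  have "\<not> 2 dvd p" using prime_odd_int[OF assms(1,2)] by simp
  have "\<not> p dvd 2" using assms(2) zdvd_imp_le[of p 2] by auto
  then have u: "\<not> p dvd 2 * x^2 * z" using assms unit_mult by (metis power2_eq_square)
  have "coprime (2 * x^2 * z) p" using u assms(1) by (metis coprime_commute prime_imp_coprime)
  then obtain v where v: "[2 * x^2 * z * v = 1] (mod p)" using cong_solve_coprime_int by blast
  define t where "t = - q * v"
  define x' where "x' = x * (1 + t * p)"
  have "[2 * x^2 * z * t = - q * 1] (mod p)"
    using cong_mult[OF v cong_refl[of "-q"]] by (simp add: t_def algebra_simps)
  then have "p dvd 2 * x^2 * z * t + q" by (simp add: cong_iff_dvd_diff)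
  then obtain r where r: "2 * x^2 * z * t + q = p * r" by blast
  have "x'^2 * z + R = p * q + p * (2 * x^2 * z * t) + p^2 * (t^2 * x^2 * z)"
    using q by (simp add: x'_def algebra_simps power2_eq_square)
  also have "\<dots> = p^2 * r + p^2 * (t^2 * x^2 * z)"
  proof -
    have "p * q + p * (2 * x^2 * z * t) = p * (2 * x^2 * z * t + q)" by (simp add: algebra_simps)
    also have "\<dots> = p^2 * r" using r by (simp add: power2_eq_square)
    finally show ?thesis by simp
  qed
  finally have d: "p^2 dvd x'^2 * z + R" by simp
  have "\<not> p dvd 1 + t * p"
  proof
    assume "p dvd 1 + t * p"
    then have "p dvd 1" by (metis dvd_add_left_iff dvd_triv_right)
    then show False using assms(1) not_prime_unit by blast
  qed
  then have "\<not> p dvd x'" unfolding x'_def using unit_mult[OF assms(1,3)] by blast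
  then show ?thesis using d by blast
qed


lemma coreA3:
  fixes p :: int
  assumes "prime p" "p > 2" "\<not> p dvd z1" "\<not> p dvd z2" "\<not> p dvd z3"
  shows "\<exists>x1 x2 x3. (x1 = 0 \<or> \<not> p dvd x1) \<and> (x2 = 0 \<or> \<not> p dvd x2) \<and> (x3 = 0 \<or> \<not> p dvd x3)
     \<and> (x1 \<noteq> 0 \<or> x2 \<noteq> 0 \<or> x3 \<noteq> 0) \<and> p^2 dvd x1^2 * z1 + x2^2 * z2 + x3^2 * z3"
proof -
  obtain x1 x2 x3 where h: "(x1 = 0 \<or> \<not> p dvd x1)" "(x2 = 0 \<or> \<not> p dvd x2)" "(x3 = 0 \<or> \<not> p dvd x3)"
     "(x1 \<noteq> 0 \<or> x2 \<noteq> 0 \<or> x3 \<noteq> 0)" and d: "p dvd x1^2 * z1 + x2^2 * z2 + x3^2 * z3"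
    using qr3[OF assms] by blast
  have nz: "\<And>x. \<not> p dvd x \<Longrightarrow> x \<noteq> 0" by auto
  consider "x1 \<noteq> 0" | "x2 \<noteq> 0" | "x3 \<noteq> 0" using h(4) by blast
  then show ?thesis
  proof cases
    case 1
    have "p dvd x1^2 * z1 + (x2^2 * z2 + x3^2 * z3)" using d by (simp add: add.assoc)
    then obtain y where "\<not> p dvd y" "p^2 dvd y^2 * z1 + (x2^2 * z2 + x3^2 * z3)"
      using lift1[OF assms(1,2) _ assms(3)] h(1) 1 by blast
    then show ?thesis using h nz by (intro exI[of _ y] exI[of _ x2] exI[of _ x3]) (simp add: add.assoc)
  next
    case 2
    have "p dvd x2^2 * z2 + (x1^2 * z1 + x3^2 * z3)" using d by (simp add: algebra_simps)
    then obtain y where "\<not> p dvd y" "p^2 dvd y^2 * z2 + (x1^2 * z1 + x3^2 * z3)"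
      using lift1[OF assms(1,2) _ assms(4)] h(2) 2 by blast
    moreover have "y^2 * z2 + (x1^2 * z1 + x3^2 * z3) = x1^2 * z1 + y^2 * z2 + x3^2 * z3" by (simp add: algebra_simps)
    ultimately show ?thesis using h nz by (intro exI[of _ x1] exI[of _ y] exI[of _ x3]) simp
  next
    case 3
    have "p dvd x3^2 * z3 + (x1^2 * z1 + x2^2 * z2)" using d by (simp add: algebra_simps)
    then obtain y where "\<not> p dvd y" "p^2 dvd y^2 * z3 + (x1^2 * z1 + x2^2 * z2)"
      using lift1[OF assms(1,2) _ assms(5)] h(3) 3 by blast
    moreover have "y^2 * z3 + (x1^2 * z1 + x2^2 * z2) = x1^2 * z1 + x2^2 * z2 + y^2 * z3" by (simp add: algebra_simps)
    ultimately show ?thesis using h nz by (intro exI[of _ x1] exI[of _ x2] exI[of _ y]) simp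
  qed
qed

lemma coreB3:
  fixes p :: int
  assumes "prime p" "p > 2" "p dvd y1" "p dvd y2" "p dvd y3"
    "\<not> p^2 dvd y1" "\<not> p^2 dvd y2" "\<not> p^2 dvd y3"
  shows "\<exists>x1 x2 x3. (x1 = 0 \<or> \<not> p dvd x1) \<and> (x2 = 0 \<or> \<not> p dvd x2) \<and> (x3 = 0 \<or> \<not> p dvd x3)
     \<and> (x1 \<noteq> 0 \<or> x2 \<noteq> 0 \<or> x3 \<noteq> 0) \<and> p^2 dvd x1^2 * y1 + x2^2 * y2 + x3^2 * y3"
proof -
  obtain z1 where z1: "y1 = p * z1" using assms(3) by blast
  obtain z2 where z2: "y2 = p * z2" using assms(4) by blast
  obtain z3 where z3: "y3 = p * z3" using assms(5) by blast
  have u1: "\<not> p dvd z1" using assms(6) z1 by (auto simp: power2_eq_square)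
  have u2: "\<not> p dvd z2" using assms(7) z2 by (auto simp: power2_eq_square)
  have u3: "\<not> p dvd z3" using assms(8) z3 by (auto simp: power2_eq_square)
  obtain x1 x2 x3 where h: "(x1 = 0 \<or> \<not> p dvd x1)" "(x2 = 0 \<or> \<not> p dvd x2)" "(x3 = 0 \<or> \<not> p dvd x3)"
     "(x1 \<noteq> 0 \<or> x2 \<noteq> 0 \<or> x3 \<noteq> 0)" and d: "p dvd x1^2 * z1 + x2^2 * z2 + x3^2 * z3"
    using qr3[OF assms(1,2) u1 u2 u3] by blast
  have e: "x1^2 * y1 + x2^2 * y2 + x3^2 * y3 = p * (x1^2 * z1 + x2^2 * z2 + x3^2 * z3)"
    using z1 z2 z3 by (simp add: algebra_simps)
  have "p * p dvd p * (x1^2 * z1 + x2^2 * z2 + x3^2 * z3)" using d by simp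
  then have "p^2 dvd x1^2 * y1 + x2^2 * y2 + x3^2 * y3" unfolding e by (simp add: power2_eq_square)
  then show ?thesis using h by blast
qed

lemma sum_pick3:
  fixes y :: "nat \<Rightarrow> int"
  assumes "i \<noteq> j" "i \<noteq> k" "j \<noteq> k" "i < N" "j < N" "k < N"
  shows "(\<Sum>l<N. (if l = i then a else if l = j then b else if l = k then c else 0)^2 * y l)
         = a^2 * y i + b^2 * y j + c^2 * y k"
proof -
  let ?g = "\<lambda>l. (if l = i then a else if l = j then b else if l = k then c else 0)^2 * y l"
  have "(\<Sum>l<N. ?g l) = (\<Sum>l\<in>{i,j,k}. ?g l)"
    by (rule sum.mono_neutral_right) (use assms in auto)
  also have "\<dots> = a^2 * y i + b^2 * y j + c^2 * y k" using assms by (simp add: add.assoc)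
  finally show ?thesis .
qed

lemma three_of_card:
  assumes "card S \<ge> 3" 
  obtains i j k where "i \<in> S" "j \<in> S" "k \<in> S" "i \<noteq> j" "i \<noteq> k" "j \<noteq> k"
proof -
  obtain T where T: "T \<subseteq> S" "card T = 3" using obtain_subset_with_card_n[OF assms] by metis
  then obtain i j k where "T = {i,j,k}" "i \<noteq> j" "j \<noteq> k" "i \<noteq> k" using card_3_iff by metis
  then show ?thesis using that T by auto
qed

lemma core5:
  fixes p :: int and y :: "nat \<Rightarrow> int"
  assumes "prime p" "p > 2"
  shows "\<exists>x. (\<forall>l<5. x l = 0 \<or> \<not> p dvd x l) \<and> (\<exists>l<5. x l \<noteq> 0) \<and> p^2 dvd (\<Sum>l<5. (x l)^2 * y l)"
proof (cases "\<exists>i<5. p^2 dvd y i")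
  case True
  then obtain i where i: "i < 5" "p^2 dvd y i" by blast
  define x where "x = (\<lambda>l. if l = i then (1::int) else 0)"
  have "(\<Sum>l<5. (x l)^2 * y l) = (\<Sum>l<5. if l = i then y l else 0)"
    by (rule sum.cong) (auto simp: x_def)
  also have "\<dots> = y i" using i by simp
  finally have "p^2 dvd (\<Sum>l<5. (x l)^2 * y l)" using i by simp
  moreover have "\<forall>l<5. x l = 0 \<or> \<not> p dvd x l" using assms(1) not_prime_unit by (auto simp: x_def)
  moreover have "\<exists>l<5. x l \<noteq> 0" using i by (auto simp: x_def)
  ultimately show ?thesis by blast
next
  case False
  define U where "U = {l\<in>{..<5::nat}. \<not> p dvd y l}"
  define V where "V = {l\<in>{..<5::nat}. p dvd y l}"
  have "U \<union> V = {..<5}" "U \<inter> V = {}" by (auto simp: U_def V_def)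
  then have "card U + card V = 5" using card_Un_disjoint[of U V] by (simp add: U_def V_def)
  then have "card U \<ge> 3 \<or> card V \<ge> 3" by linarith
  then obtain i j k x1 x2 x3 where ijk: "i < 5" "j < 5" "k < 5" "i \<noteq> j" "i \<noteq> k" "j \<noteq> k"
    and h: "(x1 = 0 \<or> \<not> p dvd x1)" "(x2 = 0 \<or> \<not> p dvd x2)" "(x3 = 0 \<or> \<not> p dvd x3)"
     "(x1 \<noteq> 0 \<or> x2 \<noteq> 0 \<or> x3 \<noteq> 0)" and d: "p^2 dvd x1^2 * y i + x2^2 * y j + x3^2 * y k"
  proof
    assume "card U \<ge> 3"
    then obtain i j k where ijk: "i \<in> U" "j \<in> U" "k \<in> U" "i \<noteq> j" "i \<noteq> k" "j \<noteq> k" by (rule three_of_card)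
    then have "\<not> p dvd y i" "\<not> p dvd y j" "\<not> p dvd y k" by (auto simp: U_def)
    then obtain x1 x2 x3 where "(x1 = 0 \<or> \<not> p dvd x1)" "(x2 = 0 \<or> \<not> p dvd x2)" "(x3 = 0 \<or> \<not> p dvd x3)"
     "(x1 \<noteq> 0 \<or> x2 \<noteq> 0 \<or> x3 \<noteq> 0)" "p^2 dvd x1^2 * y i + x2^2 * y j + x3^2 * y k"
      using coreA3[OF assms, of "y i" "y j" "y k"] by blast
    moreover have "i < 5" "j < 5" "k < 5" using ijk by (auto simp: U_def)
    ultimately show ?thesis using that[of i j k x1 x2 x3] ijk by blast
  next
    assume "card V \<ge> 3"
    then obtain i j k where ijk: "i \<in> V" "j \<in> V" "k \<in> V" "i \<noteq> j" "i \<noteq> k" "j \<noteq> k" by (rule three_of_card)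
    then have lt: "i < 5" "j < 5" "k < 5" by (auto simp: V_def)
    have "\<not> p^2 dvd y i" "\<not> p^2 dvd y j" "\<not> p^2 dvd y k" using False lt by auto
    moreover have "p dvd y i" "p dvd y j" "p dvd y k" using ijk by (auto simp: V_def)
    ultimately obtain x1 x2 x3 where "(x1 = 0 \<or> \<not> p dvd x1)" "(x2 = 0 \<or> \<not> p dvd x2)" "(x3 = 0 \<or> \<not> p dvd x3)"
     "(x1 \<noteq> 0 \<or> x2 \<noteq> 0 \<or> x3 \<noteq> 0)" "p^2 dvd x1^2 * y i + x2^2 * y j + x3^2 * y k"
      using coreB3[OF assms, of "y i" "y j" "y k"] by blast
    then show ?thesis using that[of i j k x1 x2 x3] ijk lt by blast
  qed
  define x where "x = (\<lambda>l. if l = i then x1 else if l = j then x2 else if l = k then x3 else 0)"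
  have "(\<Sum>l<5. (x l)^2 * y l) = x1^2 * y i + x2^2 * y j + x3^2 * y k"
    unfolding x_def using sum_pick3[OF ijk(4,5,6,1,2,3)] .
  then have "p^2 dvd (\<Sum>l<5. (x l)^2 * y l)" using d by simp
  moreover have "\<forall>l<5. x l = 0 \<or> \<not> p dvd x l" using h by (auto simp: x_def)
  moreover have "\<exists>l<5. x l \<noteq> 0" using h ijk by (auto simp: x_def)
  ultimately show ?thesis by blast
qed


lemma w1_aux:
  fixes ys :: "int list" and A :: "int set"
  shows "\<forall>b. (\<forall>i<length ys. b i \<noteq> 0 \<longrightarrow> b i \<in> A) \<longrightarrow>
    (\<exists>zs as. subseq zs ys \<and> length as = length zs \<and> set as \<subseteq> A \<and>
      (\<Sum>i<length zs. as!i * zs!i) = (\<Sum>i<length ys. b i * ys!i) \<and>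
      (zs = [] \<longrightarrow> (\<forall>i<length ys. b i = 0)))"
proof (induction ys)
  case Nil
  show ?case
  proof (intro allI impI)
    fix b :: "nat \<Rightarrow> int"
    show "\<exists>zs as. subseq zs [] \<and> length as = length zs \<and> set as \<subseteq> A \<and>
      (\<Sum>i<length zs. as!i * zs!i) = (\<Sum>i<length []. b i * []!i) \<and>
      (zs = [] \<longrightarrow> (\<forall>i<length []. b i = 0))"
      by (rule exI[of _ "[]"], rule exI[of _ "[]"]) simp
  qed
next
  case (Cons y ys)
  show ?case
  proof (intro allI impI)
    fix b :: "nat \<Rightarrow> int"
    assume hb: "\<forall>i<length (y # ys). b i \<noteq> 0 \<longrightarrow> b i \<in> A"
    have hb': "\<forall>i<length ys. b (Suc i) \<noteq> 0 \<longrightarrow> b (Suc i) \<in> A"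
    proof (intro allI impI)
      fix i assume "i < length ys" "b (Suc i) \<noteq> 0"
      then show "b (Suc i) \<in> A" using hb[rule_format, of "Suc i"] by simp
    qed
    obtain zs as where zs: "subseq zs ys" "length as = length zs" "set as \<subseteq> A"
      "(\<Sum>i<length zs. as!i * zs!i) = (\<Sum>i<length ys. b (Suc i) * ys!i)"
      "zs = [] \<longrightarrow> (\<forall>i<length ys. b (Suc i) = 0)"
      using mp[OF spec[OF Cons.IH, of "\<lambda>i. b (Suc i)"] hb'] by blast
    have sumY: "(\<Sum>i<length (y#ys). b i * (y#ys)!i) = b 0 * y + (\<Sum>i<length ys. b (Suc i) * ys!i)"
      by (simp only: length_Cons sum.lessThan_Suc_shift) simp
    show "\<exists>zs as. subseq zs (y # ys) \<and> length as = length zs \<and> set as \<subseteq> A \<and>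
      (\<Sum>i<length zs. as!i * zs!i) = (\<Sum>i<length (y # ys). b i * (y # ys)!i) \<and>
      (zs = [] \<longrightarrow> (\<forall>i<length (y # ys). b i = 0))"
    proof (cases "b 0 = 0")
      case True
      have z: "\<forall>i<length (y # ys). b i = 0" if "zs = []"
      proof (intro allI impI)
        fix i assume "i < length (y # ys)"
        then show "b i = 0" using True zs(5) that by (cases i) auto
      qed
      have s1: "subseq zs (y # ys)" using zs(1) by (rule list_emb_Cons)
      have "(\<Sum>i<length zs. as!i * zs!i) = (\<Sum>i<length (y # ys). b i * (y # ys)!i)"
        using zs(4) sumY True by simp
      then show ?thesis using z s1 zs(2,3) by blast
    next
      case False
      have bA: "b 0 \<in> A" using hb[rule_format, of 0] False by simp
      have ss: "(\<Sum>i<length (y#zs). (b 0 # as)!i * (y#zs)!i) = b 0 * y + (\<Sum>i<length zs. as!i * zs!i)"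
        by (simp only: length_Cons sum.lessThan_Suc_shift) simp
      have s1: "subseq (y#zs) (y # ys)" using zs(1) by simp
      have "set (b 0 # as) \<subseteq> A" using bA zs(3) by simp
      moreover have "length (b 0 # as) = length (y # zs)" using zs(2) by simp
      moreover have "(\<Sum>i<length (y#zs). (b 0 # as)!i * (y#zs)!i) = (\<Sum>i<length (y # ys). b i * (y # ys)!i)"
        using ss sumY zs(4) by simp
      ultimately show ?thesis using s1 by blast
    qed
  qed
qed

lemma w1:
  fixes ys :: "int list" and A :: "int set"
  assumes "\<forall>i<length ys. b i \<noteq> 0 \<longrightarrow> b i \<in> A" "\<exists>i<length ys. b i \<noteq> 0"
    "(\<Sum>i<length ys. b i * ys!i) mod int n = 0"
  shows "has_wzs_subseq n A ys"
proof -
  obtain zs as where zs: "subseq zs ys" "length as = length zs" "set as \<subseteq> A"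
      "(\<Sum>i<length zs. as!i * zs!i) = (\<Sum>i<length ys. b i * ys!i)"
      "zs = [] \<longrightarrow> (\<forall>i<length ys. b i = 0)"
    using mp[OF spec[OF w1_aux[of ys A], of b] assms(1)] by blast
  have z1: "zs \<noteq> []" using zs(5) assms(2) by blast
  have z2: "(\<Sum>i<length zs. as!i * zs!i) mod int n = 0" using zs(4) assms(3) by simp
  have "weighted_zero_sum n A zs" unfolding weighted_zero_sum_def
    using z1 z2 zs(2,3) by (intro conjI exI[of _ as]) simp_all
  then show ?thesis unfolding has_wzs_subseq_def using zs(1) by blast
qed

lemma w2:
  fixes zs ys as :: "int list"
  assumes "subseq zs ys"
  shows "length as = length zs \<Longrightarrow> \<exists>b. (\<forall>i. b i = 0 \<or> b i \<in> set as) \<and> (zs \<noteq> [] \<longrightarrow> (\<exists>i<length ys. b i \<in> set as))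
    \<and> (\<Sum>i<length zs. as!i * zs!i) = (\<Sum>i<length ys. b i * ys!i)"
  using assms
proof (induction arbitrary: as rule: list_emb.induct)
  case (list_emb_Nil ys)
  then show ?case by (intro exI[of _ "\<lambda>_. 0"]) simp
next
  case (list_emb_Cons xs ys y)
  obtain b where b: "\<forall>i. b i = 0 \<or> b i \<in> set as" "xs \<noteq> [] \<longrightarrow> (\<exists>i<length ys. b i \<in> set as)"
    "(\<Sum>i<length xs. as!i * xs!i) = (\<Sum>i<length ys. b i * ys!i)"
    using list_emb_Cons by blast
  define b' where "b' = (\<lambda>i. if i = 0 then 0 else b (i - 1))"
  have "(\<Sum>i<length (y#ys). b' i * (y#ys)!i) = (\<Sum>i<length ys. b i * ys!i)"
    by (simp only: length_Cons sum.lessThan_Suc_shift) (simp add: b'_def)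
  moreover have "\<forall>i. b' i = 0 \<or> b' i \<in> set as" using b(1) by (simp add: b'_def)
  moreover have "xs \<noteq> [] \<longrightarrow> (\<exists>i<length (y#ys). b' i \<in> set as)"
  proof
    assume "xs \<noteq> []"
    then obtain i where "i < length ys" "b i \<in> set as" using b(2) by blast
    then show "\<exists>i<length (y#ys). b' i \<in> set as" by (intro exI[of _ "Suc i"]) (simp add: b'_def)
  qed
  ultimately show ?case using b(3) by metis
next
  case (list_emb_Cons2 x y xs ys)
  then obtain a as' where as: "as = a # as'" "length as' = length xs" by (cases as) auto
  obtain b where b: "\<forall>i. b i = 0 \<or> b i \<in> set as'" "xs \<noteq> [] \<longrightarrow> (\<exists>i<length ys. b i \<in> set as')"
    "(\<Sum>i<length xs. as'!i * xs!i) = (\<Sum>i<length ys. b i * ys!i)"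
    using list_emb_Cons2.IH as(2) by blast
  define b' where "b' = (\<lambda>i. if i = 0 then a else b (i - 1))"
  have "(\<Sum>i<length (y#ys). b' i * (y#ys)!i) = a * y + (\<Sum>i<length ys. b i * ys!i)"
    by (simp only: length_Cons sum.lessThan_Suc_shift) (simp add: b'_def)
  moreover have "(\<Sum>i<length (x#xs). as!i * (x#xs)!i) = a * x + (\<Sum>i<length xs. as'!i * xs!i)"
    by (simp only: length_Cons sum.lessThan_Suc_shift) (simp add: as(1))
  moreover have "\<forall>i. b' i = 0 \<or> b' i \<in> set as" using b(1) by (auto simp: b'_def as(1))
  moreover have "\<exists>i<length (y#ys). b' i \<in> set as" by (intro exI[of _ 0]) (simp add: b'_def as(1))
  ultimately show ?case using b(3) list_emb_Cons2.hyps(1) by auto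
qed

lemma Q0:
  fixes P :: int
  assumes "prime P" "\<not> QuadRes P (- c)" "P dvd a^2 + c * b^2"
  shows "P dvd a \<and> P dvd b"
proof -
  have pb: "P dvd b"
  proof (rule ccontr)
    assume nb: "\<not> P dvd b"
    have "coprime b P" using nb assms(1) by (metis coprime_commute prime_imp_coprime)
    then obtain b' where bb: "[b * b' = 1] (mod P)" using cong_solve_coprime_int by blast
    have e: "(a^2 + c * b^2) * b'^2 = (a * b')^2 + c * (b * b')^2" by (simp add: algebra_simps power2_eq_square)
    have "[(a^2 + c * b^2) * b'^2 = 0 * b'^2] (mod P)"
      using assms(3) by (intro cong_mult cong_refl) (simp add: cong_0_iff)
    then have c1: "[(a * b')^2 + c * (b * b')^2 = 0] (mod P)" using e by simp
    have "[(a * b')^2 + c * (b * b')^2 = (a * b')^2 + c * 1^2] (mod P)"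
      by (intro cong_add cong_refl cong_mult cong_pow bb)
    then have "[(a * b')^2 + c = 0] (mod P)" using c1 cong_sym cong_trans by (metis mult.right_neutral one_power2)
    then have "P dvd (a * b')^2 + c" by (simp add: cong_0_iff)
    then have "[(a * b')^2 = - c] (mod P)" by (simp add: cong_iff_dvd_diff)
    then show False using assms(2) unfolding QuadRes_def by blast
  qed
  then have "P dvd c * b^2" by (simp add: power2_eq_square)
  then have "P dvd a^2" using assms(3) by (metis dvd_add_left_iff add.commute)
  then have "P dvd a" using assms(1) prime_dvd_power by blast
  then show ?thesis using pb by blast
qed

lemma desc:
  fixes P :: int
  assumes pr: "prime P" and nq: "\<not> QuadRes P (- c)"
    and y1: "[y1 = 1] (mod P)" and y2: "[y2 = c] (mod P)"
    and y3: "[y3 = P] (mod P^2)" and y4: "[y4 = P * c] (mod P^2)"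
  shows "P^(2*e) dvd x1^2 * y1 + x2^2 * y2 + x3^2 * y3 + x4^2 * y4 \<Longrightarrow>
     P^e dvd x1 \<and> P^e dvd x2 \<and> P^e dvd x3 \<and> P^e dvd x4"
proof (induction e arbitrary: x1 x2 x3 x4)
  case 0
  then show ?case by simp
next
  case (Suc e)
  let ?S = "x1^2 * y1 + x2^2 * y2 + x3^2 * y3 + x4^2 * y4"
  have P0: "P \<noteq> 0" using pr by auto
  have pe: "P^(2 * Suc e) = P^2 * P^(2*e)" by (simp add: power_add[symmetric])
  have "P^2 dvd P^(2 * Suc e)" unfolding pe by (rule dvd_triv_left)
  then have d2: "P^2 dvd ?S" using Suc.prems dvd_trans by blast
  then have d1: "P dvd ?S" by (metis dvd_trans dvd_triv_left power2_eq_square)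
  have y3p: "[y3 = 0] (mod P)"
  proof -
    have "[y3 = P] (mod P)" using cong_dvd_modulus[OF y3, of P] by (simp add: power2_eq_square)
    moreover have "[P = 0] (mod P)" by (simp add: cong_0_iff)
    ultimately show ?thesis by (rule cong_trans)
  qed
  have y4p: "[y4 = 0] (mod P)"
  proof -
    have "[y4 = P * c] (mod P)" using cong_dvd_modulus[OF y4, of P] by (simp add: power2_eq_square)
    moreover have "[P * c = 0] (mod P)" by (simp add: cong_0_iff)
    ultimately show ?thesis by (rule cong_trans)
  qed
  have "[?S = x1^2 * 1 + x2^2 * c + x3^2 * 0 + x4^2 * 0] (mod P)"
    by (intro cong_add cong_mult cong_refl y1 y2 y3p y4p)
  then have "P dvd x1^2 + c * x2^2" using d1 by (simp add: cong_0_iff cong_dvd_iff mult.commute)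
  then have a12: "P dvd x1 \<and> P dvd x2" using Q0[OF pr nq] by blast
  then obtain u1 u2 where u: "x1 = P * u1" "x2 = P * u2" by blast
  have "?S = P^2 * (u1^2 * y1 + u2^2 * y2) + (x3^2 * y3 + x4^2 * y4)"
    using u by (simp add: algebra_simps power2_eq_square)
  then have d34: "P^2 dvd x3^2 * y3 + x4^2 * y4" using d2 by (metis dvd_add_right_iff dvd_triv_left)
  have "[x3^2 * y3 + x4^2 * y4 = x3^2 * P + x4^2 * (P * c)] (mod P^2)"
    by (intro cong_add cong_mult cong_refl y3 y4)
  then have "P^2 dvd x3^2 * P + x4^2 * (P * c)" using d34 by (simp add: cong_dvd_iff)
  moreover have "x3^2 * P + x4^2 * (P * c) = P * (x3^2 + c * x4^2)" by (simp add: algebra_simps)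
  ultimately have "P * P dvd P * (x3^2 + c * x4^2)" by (simp add: power2_eq_square)
  then have "P dvd x3^2 + c * x4^2" using P0 by simp
  then have a34: "P dvd x3 \<and> P dvd x4" using Q0[OF pr nq] by blast
  then obtain u3 u4 where u': "x3 = P * u3" "x4 = P * u4" by blast
  have Se: "?S = P^2 * (u1^2 * y1 + u2^2 * y2 + u3^2 * y3 + u4^2 * y4)"
    using u u' by (simp add: algebra_simps power2_eq_square)
  have "P^2 * P^(2*e) dvd P^2 * (u1^2 * y1 + u2^2 * y2 + u3^2 * y3 + u4^2 * y4)"
    using Suc.prems unfolding pe Se .
  moreover have "P^2 \<noteq> 0" using P0 by simp
  ultimately have "P^(2*e) dvd u1^2 * y1 + u2^2 * y2 + u3^2 * y3 + u4^2 * y4"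
    using dvd_mult_cancel_left by blast
  then have "P^e dvd u1 \<and> P^e dvd u2 \<and> P^e dvd u3 \<and> P^e dvd u4" using Suc.IH by blast
  then show ?case using u u' by (simp add: mult_dvd_mono)
qed


lemma odd_prime_factor:
  assumes "odd (m::nat)" "prime p" "p dvd m"
  shows "p > 2"
proof -
  have "p \<noteq> 2" using assms by auto
  moreover have "p \<ge> 2" using assms(2) prime_ge_2_nat by blast
  ultimately show ?thesis by simp
qed

lemma upper:
  fixes n :: nat
  assumes "n > 1" "odd n" "\<exists>m. n = m^2"
  shows "\<forall>ys. length ys = 5 \<and> set ys \<subseteq> Zn n \<longrightarrow> has_wzs_subseq n (sq_set_star n) ys"
proof (intro allI impI)
  fix ys :: "int list" assume ys: "length ys = 5 \<and> set ys \<subseteq> Zn n"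
  obtain m where m: "n = m^2" using assms(3) by blast
  have m1: "m \<noteq> 1" using m assms(1) by auto
  have m0: "m \<noteq> 0" using m assms(1) by (cases m) auto
  obtain p where p: "prime p" "p dvd m" using prime_factor_nat[OF m1] by blast
  have "odd m" using assms(2) m by simp
  then have p2: "p > 2" using odd_prime_factor p by blast
  define P where "P = int p"
  define Mq where "Mq = int (m div p)"
  define N where "N = int n"
  have PM: "int m = P * Mq" using p(2) by (simp add: P_def Mq_def of_nat_mult[symmetric])
  have N: "N = P^2 * Mq^2" using PM m by (simp add: N_def power_mult_distrib)
  have Pp: "prime P" "P > 2" using p p2 by (simp_all add: P_def)
  have Mq0: "Mq \<noteq> 0" using PM m0 by auto
  have N0: "N > 0" using assms(1) by (simp add: N_def)
  define y where "y l = ys ! l" for l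
  obtain x where x: "\<forall>l<5. x l = 0 \<or> \<not> P dvd x l" "\<exists>l<5. x l \<noteq> 0"
      "P^2 dvd (\<Sum>l<5. (x l)^2 * y l)"
    using core5[OF Pp, of y] by blast
  define b where "b l = (Mq * x l)^2 mod N" for l
  have bsq: "b l \<in> sq_set n" for l
  proof -
    have "(Mq * x l) mod N \<in> Zn n" using N0 by (simp add: Zn_def N_def)
    moreover have "b l = (((Mq * x l) mod N)^2) mod int n" by (simp add: b_def N_def power_mod)
    ultimately show ?thesis unfolding sq_set_def by blast
  qed
  have bnz: "b l \<noteq> 0" if "\<not> P dvd x l" for l
  proof
    assume "b l = 0"
    then have "N dvd (Mq * x l)^2" by (simp add: b_def dvd_eq_mod_eq_0)
    then have "Mq^2 * P^2 dvd Mq^2 * (x l)^2" using N by (simp add: power_mult_distrib mult.commute)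
    then have "P^2 dvd (x l)^2" using Mq0 by simp
    then have "P dvd (x l)^2" by (metis dvd_trans dvd_triv_left power2_eq_square)
    then have "P dvd x l" using Pp(1) prime_dvd_power by blast
    then show False using that by simp
  qed
  have c1: "\<forall>i<length ys. b i \<noteq> 0 \<longrightarrow> b i \<in> sq_set_star n" using bsq by (simp add: sq_set_star_def)
  have c2: "\<exists>i<length ys. b i \<noteq> 0" using x(1,2) bnz ys by auto
  have "[(\<Sum>l<5. b l * ys ! l) = (\<Sum>l<5. (Mq * x l)^2 * ys ! l)] (mod N)"
    by (rule cong_sum) (simp add: b_def cong_def mod_mult_left_eq)
  moreover have "(\<Sum>l<5. (Mq * x l)^2 * ys ! l) = Mq^2 * (\<Sum>l<5. (x l)^2 * y l)"
    by (simp add: sum_distrib_left power_mult_distrib y_def algebra_simps)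
  moreover have "N dvd Mq^2 * (\<Sum>l<5. (x l)^2 * y l)"
    using x(3) N by (simp add: mult.commute mult_dvd_mono)
  ultimately have "[(\<Sum>l<5. b l * ys ! l) = 0] (mod N)"
    by (metis cong_0_iff cong_trans)
  then have c3: "(\<Sum>i<length ys. b i * ys ! i) mod int n = 0" using ys by (simp add: cong_0_iff N_def)
  show "has_wzs_subseq n (sq_set_star n) ys" using w1[OF c1 c2 c3] .
qed


lemma mdvd:
  fixes m :: nat and z :: int
  assumes "m > 0" "\<forall>p\<in>prime_factors m. int p ^ multiplicity p m dvd z"
  shows "int m dvd z"
proof (cases "z = 0")
  case True then show ?thesis by simp
next
  case False
  define z' where "z' = nat \<bar>z\<bar>"
  have z'0: "z' \<noteq> 0" using False by (simp add: z'_def)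
  have "m dvd z'"
  proof (rule multiplicity_le_imp_dvd)
    show "m \<noteq> 0" using assms(1) by simp
    fix q :: nat assume q: "prime q"
    show "multiplicity q m \<le> multiplicity q z'"
    proof (cases "q dvd m")
      case False then show ?thesis by (simp add: not_dvd_imp_multiplicity_0)
    next
      case True
      then have "q \<in> prime_factors m" using q assms(1) by (simp add: in_prime_factors_iff)
      then have "int q ^ multiplicity q m dvd z" using assms(2) by blast
      then have "q ^ multiplicity q m dvd z'" by (simp add: z'_def)
      moreover have "\<not> is_unit q" using q not_prime_unit by blast
      ultimately show ?thesis using multiplicity_geI[OF z'0] by blast
    qed
  qed
  then show ?thesis by (simp add: z'_def)
qed

lemma quadres_cong:
  assumes "[a = b] (mod p)" "QuadRes p a" shows "QuadRes p b"
proof -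
  obtain y where "[y^2 = a] (mod p)" using assms(2) unfolding QuadRes_def by blast
  then have "[y^2 = b] (mod p)" using cong_trans[OF _ assms(1)] by blast
  then show ?thesis unfolding QuadRes_def by blast
qed

lemma lower:
  fixes n :: nat
  assumes "n > 1" "odd n" "\<exists>m. n = m^2"
  shows "\<exists>ys. length ys = 4 \<and> set ys \<subseteq> Zn n \<and> \<not> has_wzs_subseq n (sq_set_star n) ys"
proof -
  obtain m where m: "n = m^2" using assms(3) by blast
  have m0: "m > 0" using m assms(1) by (cases m) auto
  have "odd m" using assms(2) m by simp
  define PF where "PF = prime_factors m"
  have PFp: "prime p" "p dvd m" "p > 2" if "p \<in> PF" for p
    using that \<open>odd m\<close> odd_prime_factor m0 by (auto simp: PF_def in_prime_factors_iff)
  define nu where "nu p = (SOME a. \<not> QuadRes (int p) a)" for p :: nat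
  have nu: "\<not> QuadRes (int p) (nu p)" if "p \<in> PF" for p
  proof -
    have "prime (int p)" "int p > 2" using PFp[OF that] by auto
    then have "\<exists>a. \<not> QuadRes (int p) a" using nqr_exists by blast
    then show ?thesis unfolding nu_def by (rule someI_ex)
  qed
  have finPF: "finite PF" by (simp add: PF_def)
  have cop1: "\<forall>i\<in>PF. \<forall>j\<in>PF. i \<noteq> j \<longrightarrow> coprime i j" using PFp primes_coprime by blast
  have cop2: "\<forall>i\<in>PF. \<forall>j\<in>PF. i \<noteq> j \<longrightarrow> coprime (i^2) (j^2)" using cop1 by simp
  obtain c0 where c0: "\<forall>p\<in>PF. [c0 = nat ((- nu p) mod int p)] (mod p)"
    using chinese_remainder_nat[OF finPF cop1, of "\<lambda>p. nat ((- nu p) mod int p)"] by blast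
  obtain r0 where r0: "\<forall>p\<in>PF. [r0 = p] (mod p^2)"
    using chinese_remainder_nat[OF finPF cop2, of "\<lambda>p. p"] by blast
  define C where "C = int c0"
  define R where "R = int r0"
  define N where "N = int n"
  have N0: "N > 0" using assms(1) by (simp add: N_def)
  define ys where "ys = [1 mod N, C mod N, R mod N, (R * C) mod N]"
  have len: "length ys = 4" by (simp add: ys_def)
  have set: "set ys \<subseteq> Zn n" using N0 by (auto simp: ys_def Zn_def N_def)
  have "\<not> has_wzs_subseq n (sq_set_star n) ys"
  proof
    assume "has_wzs_subseq n (sq_set_star n) ys"
    then obtain zs where zs1: "subseq zs ys" and wz: "weighted_zero_sum n (sq_set_star n) zs"
      unfolding has_wzs_subseq_def by blast
    have zs2: "zs \<noteq> []" using wz unfolding weighted_zero_sum_def by simp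
    obtain as where as: "length as = length zs"
      "set as \<subseteq> sq_set_star n" "(\<Sum>i<length zs. as!i * zs!i) mod int n = 0"
      using wz unfolding weighted_zero_sum_def by (elim conjE exE) (intro that)
    note zs = zs1 zs2 as
    obtain b where b1: "\<forall>i. b i = 0 \<or> b i \<in> set as" and b2: "zs \<noteq> [] \<longrightarrow> (\<exists>i<length ys. b i \<in> set as)"
      and b3: "(\<Sum>i<length zs. as!i * zs!i) = (\<Sum>i<length ys. b i * ys!i)"
      using w2[OF zs(1) zs(3)] by (elim exE conjE)
    have b: "\<forall>i. b i = 0 \<or> b i \<in> set as" "\<exists>i<length ys. b i \<in> set as"
      "(\<Sum>i<length zs. as!i * zs!i) = (\<Sum>i<length ys. b i * ys!i)"
      using b1 mp[OF b2 zs2] b3 by blast+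
    have "\<forall>i. \<exists>w. b i = w^2 mod N"
    proof
      fix i
      show "\<exists>w. b i = w^2 mod N"
      proof (cases "b i = 0")
        case True then show ?thesis by (intro exI[of _ 0]) simp
      next
        case False
        then have "b i \<in> sq_set n" using b(1) zs(4) by (auto simp: sq_set_star_def)
        then show ?thesis by (auto simp: sq_set_def N_def)
      qed
    qed
    from choice[OF this] obtain x where x: "\<forall>i. b i = (x i)^2 mod N" by blast
    have cA: "[(\<Sum>i<4. b i * ys!i) = (\<Sum>i<4. (x i)^2 * ys!i)] (mod N)"
      by (rule cong_sum) (simp add: x cong_def mod_mult_left_eq)
    have "(\<Sum>i<4. b i * ys!i) mod N = 0" using b(3) zs(5) len by (simp add: N_def)
    then have cB: "[(\<Sum>i<4. b i * ys!i) = 0] (mod N)" by (simp add: cong_0_iff dvd_eq_mod_eq_0)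
    have "[(\<Sum>i<4. (x i)^2 * ys!i) = 0] (mod N)" using cong_trans[OF cong_sym[OF cA] cB] .
    then have "N dvd (\<Sum>i<4. (x i)^2 * ys!i)" by (simp add: cong_0_iff)
    moreover have "{..<4::nat} = {0,1,2,3}" by auto
    ultimately have S: "N dvd (x 0)^2 * (1 mod N) + (x 1)^2 * (C mod N) + (x 2)^2 * (R mod N) + (x 3)^2 * ((R*C) mod N)"
      by (simp add: ys_def add.assoc)
    have divs: "int p ^ multiplicity p m dvd x i" if "p \<in> PF" "i < 4" for p i
    proof -
      define P where "P = int p"
      define e where "e = multiplicity p m"
      have pr: "prime P" using PFp[OF that(1)] by (simp add: P_def)
      have "p^e dvd m" by (simp add: e_def multiplicity_dvd)
      then have "(p^e)^2 dvd m^2" by (simp add: mult_dvd_mono power2_eq_square)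
      then have "P^(2*e) dvd N" using m by (simp add: P_def N_def power_mult[symmetric] mult.commute of_nat_power[symmetric] del: of_nat_power)
      then have Sd: "P^(2*e) dvd (x 0)^2 * (1 mod N) + (x 1)^2 * (C mod N) + (x 2)^2 * (R mod N) + (x 3)^2 * ((R*C) mod N)"
        using S dvd_trans by blast
      have PN: "P dvd N" using PFp(2)[OF that(1)] m by (simp add: P_def N_def power2_eq_square)
      have P2N: "P^2 dvd N" using PFp(2)[OF that(1)] m by (simp add: P_def N_def power_mult_distrib)
      have "[c0 = nat ((- nu p) mod P)] (mod p)" using c0 that(1) by (simp add: P_def)
      then have "[C = int (nat ((- nu p) mod P))] (mod P)" unfolding C_def P_def using cong_int_iff by blast
      moreover have "int (nat ((- nu p) mod P)) = (- nu p) mod P" using pr by (simp add: prime_gt_0_int)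
      ultimately have "[C = - nu p] (mod P)" by (simp add: cong_def)
      then have "[- C = - (- nu p)] (mod P)" using cong_minus_minus_iff by blast
      then have "[- C = nu p] (mod P)" by simp
      then have nq: "\<not> QuadRes P (- C)" using nu[OF that(1)] quadres_cong P_def by blast
      have "[r0 = p] (mod p^2)" using r0 that(1) by blast
      then have "[int r0 = int p] (mod int (p^2))" using cong_int_iff by blast
      then have Rc: "[R = P] (mod P^2)" unfolding R_def P_def by simp
      have y1: "[1 mod N = 1] (mod P)" using cong_dvd_modulus[OF _ PN] by simp
      have y2: "[C mod N = C] (mod P)" using cong_dvd_modulus[OF _ PN] by simp
      have y3: "[R mod N = P] (mod P^2)" using cong_trans[OF cong_dvd_modulus[OF _ P2N] Rc] by simp
      have y4: "[(R*C) mod N = P * C] (mod P^2)"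
        using cong_trans[OF cong_dvd_modulus[OF _ P2N] cong_mult[OF Rc cong_refl[of C]]] by simp
      have "P^e dvd x 0 \<and> P^e dvd x 1 \<and> P^e dvd x 2 \<and> P^e dvd x 3"
        using desc[OF pr nq y1 y2 y3 y4 Sd] .
      moreover have "i = 0 \<or> i = 1 \<or> i = 2 \<or> i = 3" using that(2) by auto
      ultimately have "P^e dvd x i" by blast
      then show ?thesis unfolding P_def e_def .
    qed
    obtain i where i: "i < 4" "b i \<in> set as" using b(2) len by auto
    have "int m dvd x i" using mdvd[OF m0] divs[OF _ i(1)] unfolding PF_def by blast
    then have "N dvd (x i)^2" using m by (simp add: N_def power_mult_distrib)
    then have "b i = 0" using x by (simp add: dvd_eq_mod_eq_0)
    then show False using i(2) zs(4) by (auto simp: sq_set_star_def)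
  qed
  then show ?thesis using len set by blast
qed


theorem mainTheorem15:
  fixes n :: nat
  assumes "n > 1" and "odd n" and "\<exists>m. n = m^2"
  shows "weighted_davenport n (sq_set_star n) = 5"
proof -
  let ?P = "\<lambda>t. t > 0 \<and> (\<forall>ys. length ys = t \<and> set ys \<subseteq> Zn n \<longrightarrow> has_wzs_subseq n (sq_set_star n) ys)"
  have P5: "?P 5" using upper[OF assms] by simp
  obtain ys4 where ys4: "length ys4 = 4" "set ys4 \<subseteq> Zn n" "\<not> has_wzs_subseq n (sq_set_star n) ys4"
    using lower[OF assms] by blast
  have notP: "\<not> ?P t" if "t < 5" for t
  proof
    assume Pt: "?P t"
    then have t0: "t > 0" by simp
    define ys where "ys = take t ys4"
    have "length ys = t" using that ys4(1) by (simp add: ys_def)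
    moreover have "set ys \<subseteq> Zn n" using ys4(2) set_take_subset[of t ys4] by (simp add: ys_def)
    ultimately have "has_wzs_subseq n (sq_set_star n) ys" using Pt by blast
    then obtain zs where zs: "subseq zs ys" "weighted_zero_sum n (sq_set_star n) zs"
      unfolding has_wzs_subseq_def by blast
    have "subseq ys ys4" unfolding ys_def by (rule prefix_imp_subseq[OF take_is_prefix])
    then have "subseq zs ys4" using zs(1) subseq_order.trans by blast
    then have "has_wzs_subseq n (sq_set_star n) ys4" unfolding has_wzs_subseq_def using zs(2) by blast
    then show False using ys4(3) by blast
  qed
  have "(LEAST t. ?P t) = 5"
  proof (rule Least_equality)
    show "?P 5" by (rule P5)
    fix t assume "?P t"
    then show "5 \<le> t" using notP by (meson not_le)
  qed
  then show ?thesis unfolding weighted_davenport_def .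
qed

end
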